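(* Let $I=[0,1]$ or $I=[0,\infty)$ and let $X$ be a Banach ideal function space on $I$ such that the Cesàro operator $C$ is bounded on $X$. Then $CX$ contains a complemented subspace isomorphic to $L_1[0,1]$. Moreover, if $\chi_{[0,a]}\in X$ for $0<a<1$, then $\widetilde X\neq\{0\}$ and $\widetilde X$ contains a complemented subspace isomorphic to $L_\infty[0,1]$.
   Context: A Banach ideal space on $I$ is a Banach space $X$ of (classes of) Lebesgue measurable functions on $I$ such that $|f|\le|g|$ a.e. with $g\in X$ implies $f\in X$ and $\|f\|\le\|g\|$; it is assumed that $X$ contains a function $f_0$ with $f_0>0$ a.e. on $I$. The Cesàro operator is $Cf(x)=\frac1x\int_0^x f(t)\,dt$, $x\in I$; $CX=\{f: C|f|\in X\}$ with $\|f\|_{CX}=\|C|f|\|_X$. For measurable $f$ let $\widetilde f(x)=\operatorname{ess\,sup}_{t\in I,t\ge x}|f(t)|$, and $\widetilde X=\{f:\widetilde f\in X\}$ with $\|f\|_{\widetilde X}=\|\widetilde f\|_X$. $\chi_E$ denotes the indicator of $E$. *)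

theory Defs
  imports "HOL-Analysis.Analysis" "HOL-Probability.Essential_Supremum"
begin

text \<open>Functions are real-valued functions on the reals; an element of a function space on I
  is identified with its class modulo equality a.e. on I (equality in a space is expressed by
  the norm of the difference being zero).\<close>

definition banach_ideal_space ::
  "real set \<Rightarrow> (real \<Rightarrow> real) set \<Rightarrow> ((real \<Rightarrow> real) \<Rightarrow> real) \<Rightarrow> bool" where
  "banach_ideal_space I X N \<longleftrightarrow>
     X \<subseteq> borel_measurable (lebesgue_on I) \<and>
     (\<forall>f\<in>X. \<forall>g\<in>X. \<forall>a b. (\<lambda>x. a * f x + b * g x) \<in> X) \<and>
     (\<forall>f\<in>X. 0 \<le> N f) \<and>
     (\<forall>f\<in>X. N f = 0 \<longleftrightarrow> (AE x in lebesgue_on I. f x = 0)) \<and>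
     (\<forall>f\<in>X. \<forall>a. N (\<lambda>x. a * f x) = \<bar>a\<bar> * N f) \<and>
     (\<forall>f\<in>X. \<forall>g\<in>X. N (\<lambda>x. f x + g x) \<le> N f + N g) \<and>
     (\<forall>F. (\<forall>n. F n \<in> X) \<and>
          (\<forall>e>0. \<exists>M. \<forall>m\<ge>M. \<forall>n\<ge>M. N (\<lambda>x. F m x - F n x) < e) \<longrightarrow>
          (\<exists>f\<in>X. (\<lambda>n. N (\<lambda>x. F n x - f x)) \<longlonglongrightarrow> 0)) \<and>
     (\<forall>f g. f \<in> borel_measurable (lebesgue_on I) \<and> g \<in> X \<and>
            (AE x in lebesgue_on I. \<bar>f x\<bar> \<le> \<bar>g x\<bar>) \<longrightarrow> f \<in> X \<and> N f \<le> N g) \<and>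
     (\<exists>f0\<in>X. AE x in lebesgue_on I. f0 x > 0)"

definition cesaro :: "(real \<Rightarrow> real) \<Rightarrow> real \<Rightarrow> real" where
  "cesaro f x = (1 / x) * integral\<^sup>L (lebesgue_on {0..x}) f"

definition loc_int :: "real set \<Rightarrow> (real \<Rightarrow> real) \<Rightarrow> bool" where
  "loc_int I f \<longleftrightarrow> (\<forall>x\<in>I. 0 < x \<longrightarrow> integrable (lebesgue_on {0..x}) f)"

definition cesaro_bounded ::
  "real set \<Rightarrow> (real \<Rightarrow> real) set \<Rightarrow> ((real \<Rightarrow> real) \<Rightarrow> real) \<Rightarrow> bool" where
  "cesaro_bounded I X N \<longleftrightarrow>
     (\<exists>M. \<forall>f\<in>X. loc_int I f \<and> cesaro f \<in> X \<and> N (cesaro f) \<le> M * N f)"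

definition cesaro_space :: "real set \<Rightarrow> (real \<Rightarrow> real) set \<Rightarrow> (real \<Rightarrow> real) set" where
  "cesaro_space I X = {f \<in> borel_measurable (lebesgue_on I).
      loc_int I f \<and> cesaro (\<lambda>t. \<bar>f t\<bar>) \<in> X}"

definition cesaro_norm :: "((real \<Rightarrow> real) \<Rightarrow> real) \<Rightarrow> (real \<Rightarrow> real) \<Rightarrow> real" where
  "cesaro_norm N f = N (cesaro (\<lambda>t. \<bar>f t\<bar>))"

definition ess_sup_tail :: "real set \<Rightarrow> (real \<Rightarrow> real) \<Rightarrow> real \<Rightarrow> ereal" where
  "ess_sup_tail I f x = esssup (lebesgue_on ({x..} \<inter> I)) (\<lambda>t. ereal \<bar>f t\<bar>)"

definition dec_major :: "real set \<Rightarrow> (real \<Rightarrow> real) \<Rightarrow> real \<Rightarrow> real" where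
  "dec_major I f x = real_of_ereal (ess_sup_tail I f x)"

text \<open>X~ = {f : f~ in X} (f~ must be finite, equivalently finite a.e.), norm ||f~||_X.\<close>
definition tilde_space :: "real set \<Rightarrow> (real \<Rightarrow> real) set \<Rightarrow> (real \<Rightarrow> real) set" where
  "tilde_space I X = {f \<in> borel_measurable (lebesgue_on I).
      (\<forall>x\<in>I. 0 < x \<longrightarrow> ess_sup_tail I f x < \<infinity>) \<and> dec_major I f \<in> X}"

definition tilde_norm ::
  "real set \<Rightarrow> ((real \<Rightarrow> real) \<Rightarrow> real) \<Rightarrow> (real \<Rightarrow> real) \<Rightarrow> real" where
  "tilde_norm I N f = N (dec_major I f)"

definition L1_01 :: "(real \<Rightarrow> real) set" where
  "L1_01 = {f. integrable (lebesgue_on {0..1}) f}"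

definition L1_norm :: "(real \<Rightarrow> real) \<Rightarrow> real" where
  "L1_norm f = integral\<^sup>L (lebesgue_on {0..1}) (\<lambda>t. \<bar>f t\<bar>)"

definition Linf_01 :: "(real \<Rightarrow> real) set" where
  "Linf_01 = {f \<in> borel_measurable (lebesgue_on {0..1}).
      esssup (lebesgue_on {0..1}) (\<lambda>t. ereal \<bar>f t\<bar>) < \<infinity>}"

definition Linf_norm :: "(real \<Rightarrow> real) \<Rightarrow> real" where
  "Linf_norm f = real_of_ereal (esssup (lebesgue_on {0..1}) (\<lambda>t. ereal \<bar>f t\<bar>))"

text \<open>The normed function space (E, NE) contains a complemented subspace isomorphic to (F, NF):
  there is a linear isomorphic embedding T of F into E and a bounded linear projection P of E
  onto the subspace T(F) (all identities modulo null elements).\<close>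
definition has_complemented_copy ::
  "(real \<Rightarrow> real) set \<Rightarrow> ((real \<Rightarrow> real) \<Rightarrow> real) \<Rightarrow>
   (real \<Rightarrow> real) set \<Rightarrow> ((real \<Rightarrow> real) \<Rightarrow> real) \<Rightarrow> bool" where
  "has_complemented_copy E NE F NF \<longleftrightarrow>
    (\<exists>T P c C K. 0 < c \<and>
      (\<forall>f\<in>F. T f \<in> E \<and> c * NF f \<le> NE (T f) \<and> NE (T f) \<le> C * NF f) \<and>
      (\<forall>f\<in>F. \<forall>g\<in>F. \<forall>a b.
          NE (\<lambda>x. T (\<lambda>y. a * f y + b * g y) x - (a * T f x + b * T g x)) = 0) \<and>
      (\<forall>u\<in>E. P u \<in> E \<and> NE (P u) \<le> K * NE u \<and> (\<exists>f\<in>F. NE (\<lambda>x. P u x - T f x) = 0)) \<and>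
      (\<forall>u\<in>E. \<forall>v\<in>E. \<forall>a b.
          NE (\<lambda>x. P (\<lambda>y. a * u y + b * v y) x - (a * P u x + b * P v x)) = 0) \<and>
      (\<forall>f\<in>F. NE (\<lambda>x. P (T f) x - T f x) = 0))"

end

theory Submission
  imports Defs
begin

lemma AE_affine:
  fixes c t :: real
  assumes "c \<noteq> 0" and P: "{x. P x} \<in> sets lebesgue"
  shows "(AE x in lebesgue. P x) \<longleftrightarrow> (AE x in lebesgue. P (t + c * x))"
proof -
  have m: "(\<lambda>x. t + c * x) \<in> lebesgue \<rightarrow>\<^sub>M lebesgue"
    using lebesgue_affine_measurable[where c= "\<lambda>x::real. c"] assms(1) by simp
  have "(AE x in lebesgue. P x) \<longleftrightarrow> (AE x in density (distr lebesgue lebesgue (\<lambda>x. t + c * x)) (\<lambda>_. ennreal (abs c)). P x)"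
    by (rule arg_cong[where f="\<lambda>M. almost_everywhere M P"]) (rule lebesgue_real_affine[OF assms(1)])
  also have "\<dots> \<longleftrightarrow> (AE x in distr lebesgue lebesgue (\<lambda>x. t + c * x). P x)"
    using assms(1) by (subst AE_density) auto
  also have "\<dots> \<longleftrightarrow> (AE x in lebesgue. P (t + c * x))"
    by (rule AE_distr_iff[OF m]) (use P in simp)
  finally show ?thesis .
qed

definition Tm :: "(real\<Rightarrow>real) \<Rightarrow> real \<Rightarrow> real" where
  "Tm f x = indicator {1/4..1/2} x * f (4*x - 1)"
definition Pm :: "(real\<Rightarrow>real) \<Rightarrow> real \<Rightarrow> real" where
  "Pm u x = indicator {1/4..1/2} x * u x"

lemma ind_eq: "(indicator {0..1::real} (-1 + 4*x) :: real) = indicator {1/4..1/2} x"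
  by (auto simp: indicator_def)

lemma Tm_alt: "Tm f = (\<lambda>x. (\<lambda>y. indicator {0..1} y * f y) (-1 + 4*x))"
  by (auto simp: Tm_def ind_eq[symmetric] fun_eq_iff)

lemma Pm_Tm: "Pm u = Tm (\<lambda>z. u (1/4 + z/4))"
proof -
  have "1/4 + (4 * x - 1) / 4 = x" for x :: real by (simp add: field_simps)
  then show ?thesis by (simp add: Tm_def Pm_def fun_eq_iff)
qed

lemma PmTm: "Pm (Tm f) = Tm f"
  by (auto simp: Tm_def Pm_def fun_eq_iff indicator_def)

lemma meas_ext:
  fixes f :: "real \<Rightarrow> real"
  assumes "f \<in> borel_measurable (lebesgue_on S)" "S \<in> sets lebesgue"
  shows "(\<lambda>x. indicator S x * f x) \<in> borel_measurable lebesgue"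
  using assms borel_measurable_restrict_space_iff[of S lebesgue f] by simp

lemma meas_res:
  fixes f :: "real \<Rightarrow> 'b::topological_space"
  assumes "f \<in> borel_measurable lebesgue"
  shows "f \<in> borel_measurable (lebesgue_on S)"
  using assms measurable_restrict_space1 by blast

lemma Tm_meas:
  assumes "f \<in> borel_measurable (lebesgue_on {0..1})"
  shows "Tm f \<in> borel_measurable lebesgue"
  unfolding Tm_alt
  using borel_measurable_affine[OF meas_ext[OF assms], of 4 "-1"] by simp

lemma esssup_sub:
  fixes h :: "real \<Rightarrow> ereal"
  assumes "A \<subseteq> B" "A \<in> sets lebesgue" "B \<in> sets lebesgue" "h \<in> borel_measurable (lebesgue_on B)"
  shows "esssup (lebesgue_on A) h \<le> esssup (lebesgue_on B) h"
proof (rule esssup_I)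
  show "h \<in> borel_measurable (lebesgue_on A)" using assms(4,1) by (rule measurable_restrict_mono)
  have "AE x in lebesgue_on B. h x \<le> esssup (lebesgue_on B) h" by (rule esssup_AE)
  then have "AE x in lebesgue. x \<in> B \<longrightarrow> h x \<le> esssup (lebesgue_on B) h"
    using AE_restrict_space_iff[of B lebesgue] assms(3) by simp
  then have "AE x in lebesgue. x \<in> A \<longrightarrow> h x \<le> esssup (lebesgue_on B) h"
    using assms(1) by (auto elim!: AE_mp)
  then show "AE x in lebesgue_on A. h x \<le> esssup (lebesgue_on B) h"
    using AE_restrict_space_iff[of A lebesgue] assms(2) by simp
qed

lemma esssup_abs_cases:
  fixes g :: "real \<Rightarrow> real"
  assumes "g \<in> borel_measurable (lebesgue_on A)" 
  shows "esssup (lebesgue_on A) (\<lambda>t. ereal \<bar>g t\<bar>) = -\<infinity> \<or> esssup (lebesgue_on A) (\<lambda>t. ereal \<bar>g t\<bar>) \<ge> 0"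
proof (cases "emeasure (lebesgue_on A) (space (lebesgue_on A)) = 0")
  have m: "(\<lambda>t. ereal \<bar>g t\<bar>) \<in> borel_measurable (lebesgue_on A)"
    using assms by measurable
  case True then show ?thesis using esssup_zero_space[OF True m] by simp
next
  case False
  have "esssup (lebesgue_on A) (\<lambda>t. ereal 0) \<le> esssup (lebesgue_on A) (\<lambda>t. ereal \<bar>g t\<bar>)"
    by (rule esssup_mono) auto
  then show ?thesis using esssup_const[OF False, of "ereal 0"] by (simp add: zero_ereal_def)
qed

lemma borel_to_lebesgue:
  fixes f :: "real \<Rightarrow> real"
  assumes "f \<in> borel_measurable borel"
  shows "f \<in> borel_measurable (lebesgue_on S)"
proof -
  have "f \<in> borel_measurable lborel" using assms by simp
  then have "f \<in> borel_measurable lebesgue" by (rule measurable_completion)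
  then show ?thesis by (rule meas_res)
qed

lemma antimono_meas:
  fixes f :: "real \<Rightarrow> real"
  assumes "\<And>x y. x \<le> y \<Longrightarrow> f y \<le> f x"
  shows "f \<in> borel_measurable (lebesgue_on S)"
proof -
  have "mono (\<lambda>x. - f x)" using assms by (auto simp: mono_def)
  then have "(\<lambda>x. - f x) \<in> borel_measurable borel" by (rule borel_measurable_mono)
  then have "(\<lambda>x. - (- f x)) \<in> borel_measurable borel" by measurable
  then show ?thesis by (intro borel_to_lebesgue) simp
qed

lemma I_facts:
  assumes "I = {0..1} \<or> I = {0::real..}"
  shows "I \<in> sets lebesgue" "{0..1} \<subseteq> I" "I \<subseteq> {0..}"
  using assms by auto

lemma bis_D1:
  assumes "banach_ideal_space I X N"
  shows "X \<subseteq> borel_measurable (lebesgue_on I)"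
  using assms unfolding banach_ideal_space_def by (elim conjE) assumption

lemma bis_D2:
  assumes "banach_ideal_space I X N"
  shows "\<forall>f\<in>X. \<forall>g\<in>X. \<forall>a b. (\<lambda>x. a * f x + b * g x) \<in> X"
  using assms unfolding banach_ideal_space_def by (elim conjE) assumption

lemma bis_D3:
  assumes "banach_ideal_space I X N"
  shows "\<forall>f\<in>X. 0 \<le> N f"
  using assms unfolding banach_ideal_space_def by (elim conjE) assumption

lemma bis_D4:
  assumes "banach_ideal_space I X N"
  shows "\<forall>f\<in>X. N f = 0 \<longleftrightarrow> (AE x in lebesgue_on I. f x = 0)"
  using assms unfolding banach_ideal_space_def by (elim conjE) assumption

lemma bis_D5:
  assumes "banach_ideal_space I X N"
  shows "\<forall>f\<in>X. \<forall>a. N (\<lambda>x. a * f x) = \<bar>a\<bar> * N f"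
  using assms unfolding banach_ideal_space_def by (elim conjE) assumption

lemma bis_D6:
  assumes "banach_ideal_space I X N"
  shows "\<forall>f g. f \<in> borel_measurable (lebesgue_on I) \<and> g \<in> X \<and>
            (AE x in lebesgue_on I. \<bar>f x\<bar> \<le> \<bar>g x\<bar>) \<longrightarrow> f \<in> X \<and> N f \<le> N g"
  using assms unfolding banach_ideal_space_def by (elim conjE) assumption

lemma bis_D7:
  assumes "banach_ideal_space I X N"
  shows "\<exists>f0\<in>X. AE x in lebesgue_on I. f0 x > 0"
  using assms unfolding banach_ideal_space_def by (elim conjE) assumption

lemma bis_zero:
  assumes "banach_ideal_space I X N"
  shows "(\<lambda>x. 0) \<in> X" "N (\<lambda>x. 0) = 0"
proof -
  obtain f0 where f0: "f0 \<in> X" using bis_D7[OF assms] by blast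
  have "(\<lambda>x. 0 * f0 x + 0 * f0 x) \<in> X" using bis_D2[OF assms] f0 by blast
  then show z: "(\<lambda>x. 0) \<in> X" by simp
  have "N (\<lambda>x. 0 * f0 x) = \<bar>0\<bar> * N f0" using bis_D5[OF assms] f0 by blast
  then show "N (\<lambda>x. 0) = 0" by simp
qed

lemma bis_ideal:
  assumes "banach_ideal_space I X N" "f \<in> borel_measurable (lebesgue_on I)" "g \<in> X"
    "AE x in lebesgue_on I. \<bar>f x\<bar> \<le> \<bar>g x\<bar>"
  shows "f \<in> X" "N f \<le> N g"
  using bis_D6[OF assms(1)] assms(2-4) by blast+

lemma bis_smult:
  assumes "banach_ideal_space I X N" "f \<in> X"
  shows "(\<lambda>x. a * f x) \<in> X" "N (\<lambda>x. a * f x) = \<bar>a\<bar> * N f"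
proof -
  have "(\<lambda>x. a * f x + 0 * f x) \<in> X" using bis_D2[OF assms(1)] assms(2) by blast
  then show "(\<lambda>x. a * f x) \<in> X" by simp
  show "N (\<lambda>x. a * f x) = \<bar>a\<bar> * N f" using bis_D5[OF assms(1)] assms(2) by blast
qed

lemma bis_pos:
  assumes "banach_ideal_space I X N" "f \<in> X" "\<not> (AE x in lebesgue_on I. f x = 0)"
  shows "N f > 0"
proof -
  have "0 \<le> N f" "N f = 0 \<longleftrightarrow> (AE x in lebesgue_on I. f x = 0)"
    using bis_D3[OF assms(1)] bis_D4[OF assms(1)] assms(2) by blast+
  then show ?thesis using assms(3) by linarith
qed

lemma bis_meas:
  assumes "banach_ideal_space I X N" "f \<in> X"
  shows "f \<in> borel_measurable (lebesgue_on I)"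
  using bis_D1[OF assms(1)] assms(2) by blast

lemma roe: "e \<le> ereal D \<Longrightarrow> (e = -\<infinity> \<or> 0 \<le> e) \<Longrightarrow> 0 \<le> D \<Longrightarrow> 0 \<le> real_of_ereal e \<and> real_of_ereal e \<le> D"
  by (cases e) auto

lemma roe_mono: "a \<le> b \<Longrightarrow> b \<le> ereal D \<Longrightarrow> (a = -\<infinity> \<or> 0 \<le> a) \<Longrightarrow> (b = -\<infinity> \<or> 0 \<le> b)
   \<Longrightarrow> real_of_ereal a \<le> real_of_ereal b"
  by (cases a; cases b) auto

lemma S_sets: "I \<in> sets lebesgue \<Longrightarrow> {x::real..} \<inter> I \<in> sets lebesgue"
proof -
  have "{x..} \<in> sets borel" by (rule atLeast_borel)
  then have "{x..} \<in> sets lborel" by simp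
  then have "{x..} \<in> sets lebesgue" by (rule sets_completionI_sets)
  then show "I \<in> sets lebesgue \<Longrightarrow> {x..} \<inter> I \<in> sets lebesgue" by (intro sets.Int)
qed

lemma dec_bound:
  fixes g :: "real \<Rightarrow> real"
  assumes I: "I = {0..1} \<or> I = {0::real..}"
    and bis: "banach_ideal_space I X N"
    and g: "g \<in> borel_measurable lebesgue" and D: "0 \<le> D"
    and gb: "AE y in lebesgue. y \<in> I \<longrightarrow> \<bar>g y\<bar> \<le> D"
    and g0: "\<And>y. y > 1/2 \<Longrightarrow> g y = 0"
    and hX: "(indicator {0..1/2} :: real \<Rightarrow> real) \<in> X"
  shows "\<forall>x. ess_sup_tail I g x \<le> ereal D" "g \<in> tilde_space I X"
    "tilde_norm I N g \<le> D * N (indicator {0..1/2})"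
proof -
  have Is: "I \<in> sets lebesgue" using I_facts[OF I] by simp
  have I0: "I \<subseteq> {0..}" using I_facts[OF I] by simp
  have hm: "(\<lambda>t. ereal \<bar>g t\<bar>) \<in> borel_measurable lebesgue" using g by measurable
  have e_le: "ess_sup_tail I g x \<le> ereal D" for x
    unfolding ess_sup_tail_def
  proof (rule esssup_I)
    show "(\<lambda>t. ereal \<bar>g t\<bar>) \<in> borel_measurable (lebesgue_on ({x..} \<inter> I))" using hm by (rule meas_res)
    have "AE t in lebesgue. t \<in> {x..} \<inter> I \<longrightarrow> ereal \<bar>g t\<bar> \<le> ereal D"
      using gb by (auto elim!: AE_mp)
    then show "AE t in lebesgue_on ({x..} \<inter> I). ereal \<bar>g t\<bar> \<le> ereal D"
      using AE_restrict_space_iff[of "{x..} \<inter> I" lebesgue] S_sets[OF Is] by simp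
  qed
  have e_le0: "ess_sup_tail I g x \<le> 0" if "x > 1/2" for x
    unfolding ess_sup_tail_def
  proof (rule esssup_I)
    show "(\<lambda>t. ereal \<bar>g t\<bar>) \<in> borel_measurable (lebesgue_on ({x..} \<inter> I))" using hm by (rule meas_res)
    have "AE t in lebesgue. t \<in> {x..} \<inter> I \<longrightarrow> ereal \<bar>g t\<bar> \<le> 0"
      using g0 that by (intro AE_I2) auto
    then show "AE t in lebesgue_on ({x..} \<inter> I). ereal \<bar>g t\<bar> \<le> 0"
      using AE_restrict_space_iff[of "{x..} \<inter> I" lebesgue] S_sets[OF Is] by simp
  qed
  have e_c: "ess_sup_tail I g x = -\<infinity> \<or> 0 \<le> ess_sup_tail I g x" for x
    unfolding ess_sup_tail_def using esssup_abs_cases[OF meas_res[OF g]] by blast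
  have dec_r: "0 \<le> dec_major I g x \<and> dec_major I g x \<le> D" for x
    unfolding dec_major_def using roe[OF e_le e_c D] .
  have dec0: "dec_major I g x = 0" if "x > 1/2" for x
  proof -
    have "0 \<le> dec_major I g x \<and> dec_major I g x \<le> 0"
      unfolding dec_major_def using roe[of "ess_sup_tail I g x" 0] e_le0[OF that] e_c[of x] by (simp add: zero_ereal_def)
    then show ?thesis by simp
  qed
  have mono: "dec_major I g y \<le> dec_major I g x" if "x \<le> y" for x y
  proof -
    have "ess_sup_tail I g y \<le> ess_sup_tail I g x"
      unfolding ess_sup_tail_def
      by (rule esssup_sub[OF _ S_sets[OF Is] S_sets[OF Is] meas_res[OF hm]]) (use that in auto)
    then show ?thesis unfolding dec_major_def using roe_mono e_le e_c by blast
  qed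
  have dm: "dec_major I g \<in> borel_measurable (lebesgue_on I)"
    by (rule antimono_meas) (rule mono)
  have hX2: "(\<lambda>x. D * indicator {0..1/2} x) \<in> X" "N (\<lambda>x. D * indicator {0..1/2} x) = D * N (indicator {0..1/2})"
    using bis_smult[OF bis hX, of D] D by auto
  have ae: "AE x in lebesgue_on I. \<bar>dec_major I g x\<bar> \<le> \<bar>D * indicator {0..1/2} x\<bar>"
  proof -
    have "AE x in lebesgue. x \<in> I \<longrightarrow> \<bar>dec_major I g x\<bar> \<le> \<bar>D * indicator {0..1/2} x\<bar>"
    proof (intro AE_I2 impI)
      fix x assume "x \<in> I"
      then have "x \<ge> 0" using I0 by auto
      then show "\<bar>dec_major I g x\<bar> \<le> \<bar>D * indicator {0..1/2} x\<bar>"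
        using dec_r[of x] dec0[of x] D by (cases "x \<le> 1/2") (auto simp: indicator_def)
    qed
    then show ?thesis using AE_restrict_space_iff[of I lebesgue] Is by simp
  qed
  have decX: "dec_major I g \<in> X" and decN: "N (dec_major I g) \<le> N (\<lambda>x. D * indicator {0..1/2} x)"
    using bis_ideal[OF bis dm hX2(1) ae] by auto
  show "\<forall>x. ess_sup_tail I g x \<le> ereal D" using e_le by blast
  show "g \<in> tilde_space I X"
    unfolding tilde_space_def
  proof (intro CollectI conjI ballI impI)
    fix x show "ess_sup_tail I g x < \<infinity>" using e_le[of x] by (rule order.strict_trans1) simp
  next
    show "g \<in> borel_measurable (lebesgue_on I)" by (rule meas_res[OF g])
  next
    show "dec_major I g \<in> X" by (rule decX)
  qed
  show "tilde_norm I N g \<le> D * N (indicator {0..1/2})"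
    unfolding tilde_norm_def using decN hX2(2) by simp
qed

lemma pred_leb: "Measurable.pred lebesgue P \<Longrightarrow> {y. P y} \<in> sets (lebesgue::real measure)"
  by (simp add: pred_def)

lemma pred_aux:
  fixes F :: "real \<Rightarrow> real" and e :: ereal
  assumes [measurable]: "F \<in> borel_measurable lebesgue"
  shows "{y. y \<in> {0..1} \<longrightarrow> ereal \<bar>F y\<bar> \<le> e} \<in> sets lebesgue"
proof -
  have "{y. y \<in> {0..1} \<longrightarrow> ereal \<bar>F y\<bar> \<le> e} = - {0..1} \<union> {y. ereal \<bar>F y\<bar> \<le> e}" by auto
  moreover have "{y. ereal \<bar>F y\<bar> \<le> e} \<in> sets lebesgue" by (rule pred_leb) measurable
  moreover have "- {0..1::real} \<in> sets lebesgue"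
  proof -
    have "space lebesgue - {0..1::real} \<in> sets lebesgue" by (intro sets.compl_sets) auto
    then show ?thesis by (simp add: Compl_eq_Diff_UNIV)
  qed
  ultimately show ?thesis by auto
qed

lemma meas01: "emeasure (lebesgue_on {0..1::real}) (space (lebesgue_on {0..1})) = 1"
  by (simp add: emeasure_restrict_space space_restrict_space)

lemma Linf_facts:
  assumes "f \<in> Linf_01"
  shows "0 \<le> Linf_norm f"
    "esssup (lebesgue_on {0..1}) (\<lambda>t. ereal \<bar>f t\<bar>) = ereal (Linf_norm f)"
    "AE y in lebesgue. \<bar>indicator {0..1} y * f y\<bar> \<le> Linf_norm f"
    "(\<lambda>y. indicator {0..1} y * f y) \<in> borel_measurable lebesgue"
proof -
  let ?E = "esssup (lebesgue_on {0..1}) (\<lambda>t. ereal \<bar>f t\<bar>)"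
  have fm: "f \<in> borel_measurable (lebesgue_on {0..1})" and fin: "?E < \<infinity>"
    using assms unfolding Linf_01_def by auto
  have "esssup (lebesgue_on {0..1::real}) (\<lambda>t. ereal 0) \<le> ?E"
    by (rule esssup_mono) (use fm in auto)
  then have E0: "0 \<le> ?E" using esssup_const[of "lebesgue_on {0..1::real}" "ereal 0"] meas01
    by (simp add: zero_ereal_def)
  then obtain L where L: "?E = ereal L" "0 \<le> L" using fin by (cases ?E) auto
  then show "0 \<le> Linf_norm f" "?E = ereal (Linf_norm f)" unfolding Linf_norm_def by auto
  have "AE y in lebesgue_on {0..1}. ereal \<bar>f y\<bar> \<le> ?E" by (rule esssup_AE)
  then have "AE y in lebesgue. y \<in> {0..1} \<longrightarrow> ereal \<bar>f y\<bar> \<le> ereal L"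
    using AE_restrict_space_iff[of "{0..1::real}" lebesgue] L by simp
  then show "AE y in lebesgue. \<bar>indicator {0..1} y * f y\<bar> \<le> Linf_norm f"
    using L unfolding Linf_norm_def by (auto elim!: AE_mp simp: indicator_def)
  show "(\<lambda>y. indicator {0..1} y * f y) \<in> borel_measurable lebesgue"
    by (rule meas_ext[OF fm]) simp
qed

lemma Tm_bound:
  assumes "f \<in> Linf_01"
  shows "AE x in lebesgue. \<bar>Tm f x\<bar> \<le> Linf_norm f"
proof -
  let ?F = "\<lambda>y. indicator {0..1} y * f y"
  note Fm[measurable] = Linf_facts(4)[OF assms]
  have "{y. \<bar>?F y\<bar> \<le> Linf_norm f} \<in> sets lebesgue"
    by (rule pred_leb) measurable
  then have "AE x in lebesgue. \<bar>?F (-1 + 4*x)\<bar> \<le> Linf_norm f"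
    using AE_affine[of 4 "\<lambda>y. \<bar>?F y\<bar> \<le> Linf_norm f" "-1"] Linf_facts(3)[OF assms] by simp
  then show ?thesis unfolding Tm_alt by simp
qed

lemma Tm_lower:
  assumes "f \<in> Linf_01" "I = {0..1} \<or> I = {0::real..}" "x \<le> 1/4"
  shows "ereal (Linf_norm f) \<le> ess_sup_tail I (Tm f) x"
proof -
  let ?F = "\<lambda>y. indicator {0..1} y * f y"
  let ?e = "ess_sup_tail I (Tm f) x"
  have Is: "I \<in> sets lebesgue" "{0..1} \<subseteq> I" using I_facts[OF assms(2)] by auto
  have fm: "f \<in> borel_measurable (lebesgue_on {0..1})" using assms unfolding Linf_01_def by auto
  have Fm: "?F \<in> borel_measurable lebesgue" using Linf_facts(4)[OF assms(1)] .
  have Tmm: "Tm f \<in> borel_measurable lebesgue" by (rule Tm_meas[OF fm])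
  have "AE y in lebesgue_on ({x..} \<inter> I). ereal \<bar>Tm f y\<bar> \<le> ?e"
    unfolding ess_sup_tail_def by (rule esssup_AE)
  then have "AE y in lebesgue. y \<in> {x..} \<inter> I \<longrightarrow> ereal \<bar>Tm f y\<bar> \<le> ?e"
    using AE_restrict_space_iff[of "{x..} \<inter> I" lebesgue] S_sets[OF Is(1)] by simp
  then have A1: "AE y in lebesgue. (-1 + 4*y \<in> {0..1} \<longrightarrow> ereal \<bar>?F (-1 + 4*y)\<bar> \<le> ?e)"
  proof (rule AE_mp, intro AE_I2 impI)
    fix y assume h: "y \<in> {x..} \<inter> I \<longrightarrow> ereal \<bar>Tm f y\<bar> \<le> ?e" "-1 + 4*y \<in> {0..1}"
    then have "y \<in> {x..} \<inter> I" using assms(3) Is(2) by auto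
    then show "ereal \<bar>?F (-1 + 4*y)\<bar> \<le> ?e" using h(1) by (simp add: Tm_alt)
  qed
  have "{y. y \<in> {0..1} \<longrightarrow> ereal \<bar>?F y\<bar> \<le> ?e} \<in> sets lebesgue"
    by (rule pred_aux[OF Fm])
  then have "AE y in lebesgue. y \<in> {0..1} \<longrightarrow> ereal \<bar>?F y\<bar> \<le> ?e"
    using AE_affine[of 4 "\<lambda>y. y \<in> {0..1} \<longrightarrow> ereal \<bar>?F y\<bar> \<le> ?e" "-1"] A1 by simp
  then have "AE y in lebesgue_on {0..1}. ereal \<bar>f y\<bar> \<le> ?e"
    using AE_restrict_space_iff[of "{0..1::real}" lebesgue] by (simp add: indicator_def)
  then have "esssup (lebesgue_on {0..1}) (\<lambda>t. ereal \<bar>f t\<bar>) \<le> ?e"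
    by (intro esssup_I) (use fm in auto)
  then show ?thesis using Linf_facts(2)[OF assms(1)] by simp
qed

lemma notAE_ind:
  assumes "S \<subseteq> I" "I \<in> sets lebesgue" "S \<in> sets lebesgue" "emeasure lebesgue S \<noteq> 0"
  shows "\<not> (AE x in lebesgue_on I. (indicator S x :: real) = 0)"
proof
  assume "AE x in lebesgue_on I. (indicator S x :: real) = 0"
  then have "AE x in lebesgue. x \<in> I \<longrightarrow> (indicator S x :: real) = 0"
    using AE_restrict_space_iff[of I lebesgue] assms(2) by simp
  then have "AE x in lebesgue. x \<notin> S" using assms(1) by (auto elim!: AE_mp simp: indicator_def)
  then have "S \<in> null_sets lebesgue" using AE_iff_measurable[of S lebesgue "\<lambda>x. x \<notin> S"] assms(3)
    by auto
  then show False using assms(4) by auto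
qed

lemma emeas_int: "a < b \<Longrightarrow> emeasure lebesgue {a..b::real} \<noteq> 0"
  by simp

lemma emeas_int2: "a < b \<Longrightarrow> emeasure lebesgue {a<..b::real} \<noteq> 0"
  by simp

lemma dec_zero: "dec_major I (\<lambda>x. 0) = (\<lambda>x. 0)"
proof
  fix x
  have "(\<lambda>t::real. 0::real) \<in> borel_measurable (lebesgue_on ({x..} \<inter> I))" by simp
  from esssup_abs_cases[OF this] have c: "ess_sup_tail I (\<lambda>x. 0) x = -\<infinity> \<or> 0 \<le> ess_sup_tail I (\<lambda>x. 0) x"
    unfolding ess_sup_tail_def by simp
  have "ess_sup_tail I (\<lambda>x. 0) x \<le> ereal 0" unfolding ess_sup_tail_def
    by (rule esssup_I) auto
  with c show "dec_major I (\<lambda>x. 0) x = 0" unfolding dec_major_def using roe[of _ 0] by force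
qed

lemma pred_aux2:
  fixes F :: "real \<Rightarrow> real" and e :: ereal
  assumes [measurable]: "F \<in> borel_measurable lebesgue"
  shows "{y. y \<in> {a..b} \<longrightarrow> ereal \<bar>F y\<bar> \<le> e} \<in> sets lebesgue"
proof -
  have "{y. y \<in> {a..b} \<longrightarrow> ereal \<bar>F y\<bar> \<le> e} = - {a..b} \<union> {y. ereal \<bar>F y\<bar> \<le> e}" by auto
  moreover have "{y. ereal \<bar>F y\<bar> \<le> e} \<in> sets lebesgue" by (rule pred_leb) measurable
  moreover have "- {a..b::real} \<in> sets lebesgue"
  proof -
    have "space lebesgue - {a..b::real} \<in> sets lebesgue" by (intro sets.compl_sets) auto
    then show ?thesis by (simp add: Compl_eq_Diff_UNIV)
  qed
  ultimately show ?thesis by auto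
qed

lemma P_part:
  assumes I: "I = {0..1} \<or> I = {0::real..}" and bis: "banach_ideal_space I X N"
    and h12: "(indicator {0..1/2} :: real \<Rightarrow> real) \<in> X"
    and h14: "(indicator {0<..1/4} :: real \<Rightarrow> real) \<in> X"
    and u: "u \<in> tilde_space I X"
  shows "Pm u \<in> tilde_space I X" "(\<lambda>z. u (1/4 + z/4)) \<in> Linf_01"
    "real_of_ereal (ess_sup_tail I u (1/4)) * N (indicator {0<..1/4}) \<le> tilde_norm I N u"
    "tilde_norm I N (Pm u) \<le> real_of_ereal (ess_sup_tail I u (1/4)) * N (indicator {0..1/2})"
proof -
  have Is: "I \<in> sets lebesgue" "{0..1} \<subseteq> I" "I \<subseteq> {0..}" using I_facts[OF I] by auto
  have um: "u \<in> borel_measurable (lebesgue_on I)" and ufin: "\<And>x. x \<in> I \<Longrightarrow> 0 < x \<Longrightarrow> ess_sup_tail I u x < \<infinity>"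
    and decX: "dec_major I u \<in> X"
    using u unfolding tilde_space_def by auto
  define U where "U = (\<lambda>x. indicator I x * u x)"
  have Um: "U \<in> borel_measurable lebesgue" unfolding U_def by (rule meas_ext[OF um Is(1)])
  define d where "d = ess_sup_tail I u (1/4)"
  define D where "D = real_of_ereal d"
  have S14: "{1/4..} \<inter> I \<in> sets lebesgue" by (rule S_sets[OF Is(1)])
  have umS: "u \<in> borel_measurable (lebesgue_on ({x..} \<inter> I))" for x
    using um by (rule measurable_restrict_mono) auto
  have dc: "d = -\<infinity> \<or> 0 \<le> d" unfolding d_def ess_sup_tail_def
    by (rule esssup_abs_cases[OF umS])
  have "(1/4::real) \<in> I" using Is(2) by auto
  then have dfin: "d < \<infinity>" unfolding d_def using ufin by simp
  have D0: "0 \<le> D" unfolding D_def using dc dfin by (cases d) auto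
  have "AE y in lebesgue_on ({1/4..} \<inter> I). ereal \<bar>u y\<bar> \<le> d"
    unfolding d_def ess_sup_tail_def by (rule esssup_AE)
  then have AEu: "AE y in lebesgue. y \<in> {1/4..} \<inter> I \<longrightarrow> ereal \<bar>u y\<bar> \<le> d"
    using AE_restrict_space_iff[of "{1/4..} \<inter> I" lebesgue] S14 by simp
  have AEU: "AE y in lebesgue. y \<in> {1/4..1/2} \<longrightarrow> ereal \<bar>U y\<bar> \<le> d"
    using AEu
  proof (rule AE_mp, intro AE_I2 impI)
    fix y assume h: "y \<in> {1/4..} \<inter> I \<longrightarrow> ereal \<bar>u y\<bar> \<le> d" "y \<in> {1/4..1/2}"
    then have "y \<in> I" using Is(2) by auto
    then show "ereal \<bar>U y\<bar> \<le> d" using h by (simp add: U_def)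
  qed
  have sub: "{1/4..1/2::real} \<subseteq> I" by (rule order.trans[OF _ Is(2)]) auto
  have Pm_eq: "Pm u = (\<lambda>x. indicator {1/4..1/2} x * U x)"
  proof
    fix x show "Pm u x = indicator {1/4..1/2} x * U x"
      using sub by (cases "x \<in> {1/4..1/2}") (auto simp: Pm_def U_def)
  qed
  have Pmm: "Pm u \<in> borel_measurable lebesgue" unfolding Pm_eq
    by (intro borel_measurable_times borel_measurable_indicator Um) auto
  have Pb: "AE y in lebesgue. y \<in> I \<longrightarrow> \<bar>Pm u y\<bar> \<le> D"
    using AEU
  proof (rule AE_mp, intro AE_I2 impI)
    fix y assume h: "y \<in> {1/4..1/2} \<longrightarrow> ereal \<bar>U y\<bar> \<le> d" "y \<in> I"
    show "\<bar>Pm u y\<bar> \<le> D"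
    proof (cases "y \<in> {1/4..1/2}")
      case True
      then have "ereal \<bar>U y\<bar> \<le> d" using h by auto
      then have "\<bar>U y\<bar> \<le> D" unfolding D_def using dfin by (cases d) auto
      then show ?thesis using True by (simp add: Pm_eq)
    qed (simp add: Pm_eq D0)
  qed
  have P0: "\<And>y. y > 1/2 \<Longrightarrow> Pm u y = 0" by (simp add: Pm_def)
  note db = dec_bound[OF I bis Pmm D0 Pb P0 h12]
  show "Pm u \<in> tilde_space I X" by (rule db(2))
  show "tilde_norm I N (Pm u) \<le> D * N (indicator {0..1/2})" by (rule db(3))
  define fu where "fu = (\<lambda>z. u (1/4 + z/4))"
  have fu_eq: "\<forall>z\<in>space (lebesgue_on {0..1}). U (1/4 + (1/4) *\<^sub>R z) = fu z"
  proof
    fix z assume "z \<in> space (lebesgue_on {0..1::real})"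
    then have "1/4 + z/4 \<in> {1/4..1/2}" by auto
    then have "1/4 + z/4 \<in> I" using sub by blast
    then show "U (1/4 + (1/4) *\<^sub>R z) = fu z" by (simp add: U_def fu_def)
  qed
  have "(\<lambda>z. U (1/4 + (1/4) *\<^sub>R z)) \<in> borel_measurable lebesgue"
    by (rule borel_measurable_affine[OF Um]) simp
  then have "(\<lambda>z. U (1/4 + (1/4) *\<^sub>R z)) \<in> borel_measurable (lebesgue_on {0..1})" by (rule meas_res)
  then have fum: "fu \<in> borel_measurable (lebesgue_on {0..1})"
    using measurable_cong[of "lebesgue_on {0..1}" "\<lambda>z. U (1/4 + (1/4) *\<^sub>R z)" fu] fu_eq by blast
  have "{y. y \<in> {1/4..1/2} \<longrightarrow> ereal \<bar>U y\<bar> \<le> d} \<in> sets lebesgue" by (rule pred_aux2[OF Um])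
  then have "AE z in lebesgue. 1/4 + (1/4) * z \<in> {1/4..1/2} \<longrightarrow> ereal \<bar>U (1/4 + (1/4) * z)\<bar> \<le> d"
    using AE_affine[of "1/4" "\<lambda>y. y \<in> {1/4..1/2} \<longrightarrow> ereal \<bar>U y\<bar> \<le> d" "1/4"] AEU by simp
  then have "AE z in lebesgue. z \<in> {0..1} \<longrightarrow> ereal \<bar>fu z\<bar> \<le> d"
    using fu_eq by (auto elim!: AE_mp)
  then have "AE z in lebesgue_on {0..1}. ereal \<bar>fu z\<bar> \<le> d"
    using AE_restrict_space_iff[of "{0..1::real}" lebesgue] by simp
  then have "esssup (lebesgue_on {0..1}) (\<lambda>t. ereal \<bar>fu t\<bar>) \<le> d"
    by (intro esssup_I) (use fum in auto)
  then show "(\<lambda>z. u (1/4 + z/4)) \<in> Linf_01"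
    unfolding Linf_01_def using fum dfin unfolding fu_def by auto
  have low: "\<bar>D * indicator {0<..1/4} x\<bar> \<le> \<bar>dec_major I u x\<bar>" if "x \<in> I" for x
  proof (cases "x \<in> {0<..1/4}")
    case True
    have "ess_sup_tail I u (1/4) \<le> ess_sup_tail I u x"
      unfolding ess_sup_tail_def
    proof (rule esssup_sub[OF _ S14 S_sets[OF Is(1)]])
      show "{1/4..} \<inter> I \<subseteq> {x..} \<inter> I" using True by auto
      show "(\<lambda>t. ereal \<bar>u t\<bar>) \<in> borel_measurable (lebesgue_on ({x..} \<inter> I))"
        using umS[of x] by measurable
    qed
    moreover have "ess_sup_tail I u x < \<infinity>" using ufin that True by auto
    moreover have "ess_sup_tail I u x = -\<infinity> \<or> 0 \<le> ess_sup_tail I u x"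
      unfolding ess_sup_tail_def by (rule esssup_abs_cases[OF umS])
    ultimately have "D \<le> dec_major I u x" unfolding D_def d_def dec_major_def
      using dc dfin unfolding d_def by (cases "ess_sup_tail I u x"; cases "ess_sup_tail I u (1/4)") auto
    then show ?thesis using True D0 by (simp add: indicator_def)
  qed simp
  have "AE x in lebesgue_on I. \<bar>D * indicator {0<..1/4} x\<bar> \<le> \<bar>dec_major I u x\<bar>"
    using low AE_restrict_space_iff[of I lebesgue] Is(1) by (auto intro!: AE_I2)
  moreover have "(\<lambda>x. D * indicator {0<..1/4} x) \<in> borel_measurable (lebesgue_on I)"
    using bis_meas[OF bis bis_smult(1)[OF bis h14]] .
  ultimately have "N (\<lambda>x. D * indicator {0<..1/4} x) \<le> N (dec_major I u)"
    using bis_ideal[OF bis _ decX] by blast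
  then show "D * N (indicator {0<..1/4}) \<le> tilde_norm I N u"
    unfolding tilde_norm_def using bis_smult(2)[OF bis h14, of D] D0 by simp
qed

lemma int_sets: "{a..b::real} \<in> sets lebesgue" "{a<..b::real} \<in> sets lebesgue"
proof -
  have "{a..b::real} \<in> sets lborel" "{a<..b::real} \<in> sets lborel" by auto
  then show "{a..b::real} \<in> sets lebesgue" "{a<..b::real} \<in> sets lebesgue"
    by (auto intro: sets_completionI_sets)
qed

lemma ind_meas: "S \<in> sets lebesgue \<Longrightarrow> (indicator S :: real \<Rightarrow> real) \<in> borel_measurable (lebesgue_on I)"
  by (intro meas_res borel_measurable_indicator)

lemma T_part:
  assumes I: "I = {0..1} \<or> I = {0::real..}" and bis: "banach_ideal_space I X N"
    and h12: "(indicator {0..1/2} :: real \<Rightarrow> real) \<in> X"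
    and h14: "(indicator {0..1/4} :: real \<Rightarrow> real) \<in> X"
    and f: "f \<in> Linf_01"
  shows "Tm f \<in> tilde_space I X" "tilde_norm I N (Tm f) \<le> N (indicator {0..1/2}) * Linf_norm f"
    "N (indicator {0..1/4}) * Linf_norm f \<le> tilde_norm I N (Tm f)"
proof -
  have Is: "I \<in> sets lebesgue" "{0..1} \<subseteq> I" "I \<subseteq> {0..}" using I_facts[OF I] by auto
  define L where "L = Linf_norm f"
  have L0: "0 \<le> L" unfolding L_def using Linf_facts(1)[OF f] .
  have fm: "f \<in> borel_measurable (lebesgue_on {0..1})" using f unfolding Linf_01_def by auto
  have Tmm: "Tm f \<in> borel_measurable lebesgue" by (rule Tm_meas[OF fm])
  have Tb: "AE y in lebesgue. y \<in> I \<longrightarrow> \<bar>Tm f y\<bar> \<le> L"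
    using Tm_bound[OF f] unfolding L_def by (auto elim!: AE_mp)
  have T0: "\<And>y. y > 1/2 \<Longrightarrow> Tm f y = 0" by (simp add: Tm_def)
  note db = dec_bound[OF I bis Tmm L0 Tb T0 h12]
  show "Tm f \<in> tilde_space I X" by (rule db(2))
  show "tilde_norm I N (Tm f) \<le> N (indicator {0..1/2}) * Linf_norm f"
    using db(3) unfolding L_def by (simp add: mult.commute)
  have decX: "dec_major I (Tm f) \<in> X" using db(2) unfolding tilde_space_def by auto
  have low: "\<bar>L * indicator {0..1/4} x\<bar> \<le> \<bar>dec_major I (Tm f) x\<bar>" if "x \<in> I" for x
  proof (cases "x \<in> {0..1/4}")
    case True
    have "ereal L \<le> ess_sup_tail I (Tm f) x" unfolding L_def
      by (rule Tm_lower[OF f I]) (use True in auto)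
    moreover have "ess_sup_tail I (Tm f) x \<le> ereal L" using db(1) by blast
    ultimately have "ess_sup_tail I (Tm f) x = ereal L" by simp
    then have "dec_major I (Tm f) x = L" unfolding dec_major_def by simp
    then show ?thesis using True L0 by (simp add: indicator_def)
  next
    case False then show ?thesis by simp
  qed
  have "AE x in lebesgue_on I. \<bar>L * indicator {0..1/4} x\<bar> \<le> \<bar>dec_major I (Tm f) x\<bar>"
    using low AE_restrict_space_iff[of I lebesgue] Is(1) by (auto intro!: AE_I2)
  moreover have "(\<lambda>x. L * indicator {0..1/4} x) \<in> borel_measurable (lebesgue_on I)"
    using bis_meas[OF bis bis_smult(1)[OF bis h14]] .
  ultimately have "N (\<lambda>x. L * indicator {0..1/4} x) \<le> N (dec_major I (Tm f))"
    using bis_ideal[OF bis _ decX] by blast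
  then show "N (indicator {0..1/4}) * Linf_norm f \<le> tilde_norm I N (Tm f)"
    unfolding tilde_norm_def using bis_smult(2)[OF bis h14, of L] L0 unfolding L_def
    by (simp add: mult.commute)
qed

lemma part2:
  assumes I: "I = {0..1} \<or> I = {0::real..}" and bis: "banach_ideal_space I X N"
    and hyp: "\<forall>a::real. 0 < a \<and> a < 1 \<longrightarrow> (indicator {0..a} :: real \<Rightarrow> real) \<in> X"
  shows "(\<exists>f\<in>tilde_space I X. \<not> (AE x in lebesgue_on I. f x = 0)) \<and>
            has_complemented_copy (tilde_space I X) (tilde_norm I N) Linf_01 Linf_norm"
proof -
  have Is: "I \<in> sets lebesgue" "{0..1} \<subseteq> I" "I \<subseteq> {0..}" using I_facts[OF I] by auto
  have h12: "(indicator {0..1/2} :: real \<Rightarrow> real) \<in> X" using hyp by auto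
  have h14: "(indicator {0..1/4} :: real \<Rightarrow> real) \<in> X" using hyp by auto
  have h14': "(indicator {0<..1/4} :: real \<Rightarrow> real) \<in> X"
    by (rule bis_ideal(1)[OF bis ind_meas[OF int_sets(2)] h14]) (auto intro!: AE_I2 simp: indicator_def)
  have c0: "N (indicator {0..1/4}) > 0"
    by (rule bis_pos[OF bis h14 notAE_ind]) (use Is in \<open>auto simp: int_sets\<close>)
  have c0': "N (indicator {0<..1/4}) > 0"
    by (rule bis_pos[OF bis h14' notAE_ind]) (use Is in \<open>auto simp: int_sets\<close>)
  have N12: "N (indicator {0..1/2}) \<ge> 0" using bis_D3[OF bis] h12 by blast
  have z: "tilde_norm I N (\<lambda>x. 0) = 0" unfolding tilde_norm_def dec_zero using bis_zero[OF bis] by simp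
  have one: "(\<lambda>_. 1::real) \<in> Linf_01"
  proof -
    have "esssup (lebesgue_on {0..1::real}) (\<lambda>t. ereal \<bar>1\<bar>) \<le> ereal 1" by (rule esssup_I) auto
    then show ?thesis unfolding Linf_01_def by (auto intro: le_less_trans)
  qed
  have ex: "\<exists>f\<in>tilde_space I X. \<not> (AE x in lebesgue_on I. f x = 0)"
  proof
    show "Tm (\<lambda>_. 1) \<in> tilde_space I X" by (rule T_part(1)[OF I bis h12 h14 one])
    have "Tm (\<lambda>_. 1) = indicator {1/4..1/2}" by (auto simp: Tm_def fun_eq_iff)
    moreover have "\<not> (AE x in lebesgue_on I. (indicator {1/4..1/2} x :: real) = 0)"
      by (rule notAE_ind) (use Is in \<open>auto simp: int_sets\<close>)
    ultimately show "\<not> (AE x in lebesgue_on I. Tm (\<lambda>_. 1) x = 0)" by simp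
  qed
  define K where "K = N (indicator {0..1/2}) / N (indicator {0<..1/4})"
  have "has_complemented_copy (tilde_space I X) (tilde_norm I N) Linf_01 Linf_norm"
    unfolding has_complemented_copy_def
  proof (rule exI[of _ Tm], rule exI[of _ Pm], rule exI[of _ "N (indicator {0..1/4})"],
      rule exI[of _ "N (indicator {0..1/2})"], rule exI[of _ K], intro conjI ballI allI)
    show "0 < N (indicator {0..1/4})" by (rule c0)
    fix f assume f: "f \<in> Linf_01"
    note tp = T_part[OF I bis h12 h14 f]
    show "Tm f \<in> tilde_space I X" by (rule tp(1))
    show "N (indicator {0..1/4}) * Linf_norm f \<le> tilde_norm I N (Tm f)" by (rule tp(3))
    show "tilde_norm I N (Tm f) \<le> N (indicator {0..1/2}) * Linf_norm f" by (rule tp(2))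
    show "tilde_norm I N (\<lambda>x. Pm (Tm f) x - Tm f x) = 0" using z by (simp add: PmTm)
  next
    fix f g a b
    show "tilde_norm I N (\<lambda>x. Tm (\<lambda>y. a * f y + b * g y) x - (a * Tm f x + b * Tm g x)) = 0"
      using z by (simp add: Tm_def algebra_simps)
  next
    fix u v a b
    show "tilde_norm I N (\<lambda>x. Pm (\<lambda>y. a * u y + b * v y) x - (a * Pm u x + b * Pm v x)) = 0"
      using z by (simp add: Pm_def algebra_simps)
  next
    fix u assume u: "u \<in> tilde_space I X"
    note pp = P_part[OF I bis h12 h14' u]
    show "Pm u \<in> tilde_space I X" by (rule pp(1))
    show "\<exists>f\<in>Linf_01. tilde_norm I N (\<lambda>x. Pm u x - Tm f x) = 0"
      using pp(2) z by (intro bexI[of _ "\<lambda>z. u (1/4 + z/4)"]) (auto simp: Pm_Tm)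
    define D where "D = real_of_ereal (ess_sup_tail I u (1/4))"
    have "D \<le> tilde_norm I N u / N (indicator {0<..1/4})"
      using pp(3) c0' unfolding D_def by (simp add: field_simps)
    then have "D * N (indicator {0..1/2}) \<le> tilde_norm I N u / N (indicator {0<..1/4}) * N (indicator {0..1/2})"
      using N12 by (rule mult_right_mono)
    then show "tilde_norm I N (Pm u) \<le> K * tilde_norm I N u"
      using pp(4) unfolding D_def K_def by (simp add: field_simps)
  qed
  with ex show ?thesis by blast
qed

lemma res_int: "S \<in> sets lebesgue \<Longrightarrow> integral\<^sup>L (lebesgue_on S) h = integral\<^sup>L lebesgue (\<lambda>t. indicator S t * (h t :: real))"
  using integral_restrict_space[of S lebesgue h] by simp

lemma res_integrable: "S \<in> sets lebesgue \<Longrightarrow> integrable (lebesgue_on S) h \<longleftrightarrow> integrable lebesgue (\<lambda>t. indicator S t * (h t :: real))"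
  using integrable_restrict_space[of S lebesgue h] by simp

lemma cb_D:
  assumes "cesaro_bounded I X N" "f \<in> X"
  shows "loc_int I f" "cesaro f \<in> X"
  using assms unfolding cesaro_bounded_def by blast+

lemma f0_facts:
  assumes I: "I = {0..1} \<or> I = {0::real..}" and bis: "banach_ideal_space I X N"
    and cb: "cesaro_bounded I X N" and f0X: "f0 \<in> X"
    and f0p: "AE x in lebesgue_on I. f0 x > 0"
  defines "m \<equiv> integral\<^sup>L (lebesgue_on {0..1/4}) f0"
  shows "m > 0" "\<And>x. x \<in> I \<Longrightarrow> x \<ge> 1/4 \<Longrightarrow> cesaro f0 x \<ge> m / x"
    "(indicator {1/2..1} :: real \<Rightarrow> real) \<in> X" "N (indicator {1/2..1}) > 0"
proof -
  have Is: "I \<in> sets lebesgue" "{0..1} \<subseteq> I" "I \<subseteq> {0..}" using I_facts[OF I] by auto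
  have li: "integrable (lebesgue_on {0..x}) f0" if "x \<in> I" "0 < x" for x
    using cb_D(1)[OF cb f0X] that unfolding loc_int_def by blast
  have cX: "cesaro f0 \<in> X" by (rule cb_D(2)[OF cb f0X])
  have AEp: "AE y in lebesgue. y \<in> I \<longrightarrow> f0 y > 0"
    using f0p AE_restrict_space_iff[of I lebesgue] Is(1) by simp
  have "(1/4::real) \<in> I" using Is(2) by auto
  then have i14: "integrable lebesgue (\<lambda>t. indicator {0..1/4} t * f0 t)"
    using li[of "1/4"] res_integrable[OF int_sets(1)] by auto
  have mi: "m = integral\<^sup>L lebesgue (\<lambda>t. indicator {0..1/4} t * f0 t)"
    unfolding m_def by (rule res_int[OF int_sets(1)])
  have nn: "AE t in lebesgue. 0 \<le> indicator {0..1/4} t * f0 t"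
    using AEp
  proof (rule AE_mp, intro AE_I2 impI)
    fix t assume h: "t \<in> I \<longrightarrow> 0 < f0 t"
    show "0 \<le> indicator {0..1/4} t * f0 t"
    proof (cases "t \<in> {0..1/4}")
      case True then have "t \<in> I" using Is(2) by auto
      then show ?thesis using h True by simp
    qed simp
  qed
  have m0: "m \<ge> 0" unfolding mi by (rule integral_nonneg_AE[OF nn])
  show "m > 0"
  proof (rule ccontr)
    assume "\<not> m > 0" then have "m = 0" using m0 by simp
    then have "AE t in lebesgue. indicator {0..1/4} t * f0 t = 0"
      using integral_nonneg_eq_0_iff_AE[OF i14 nn] mi by simp
    then have "AE t in lebesgue. t \<in> I \<longrightarrow> (indicator {0..1/4} t :: real) = 0"
      using AEp
    proof (elim AE_mp, intro AE_I2 impI)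
      fix t assume "t \<in> I \<longrightarrow> 0 < f0 t" "indicator {0..1/4} t * f0 t = 0" "t \<in> I"
      then show "(indicator {0..1/4} t :: real) = 0" by (auto simp: indicator_def split: if_splits)
    qed
    then have "AE t in lebesgue_on I. (indicator {0..1/4} t :: real) = 0"
      using AE_restrict_space_iff[of I lebesgue] Is(1) by simp
    moreover have "\<not> (AE t in lebesgue_on I. (indicator {0..1/4} t :: real) = 0)"
      by (rule notAE_ind) (use Is in \<open>auto simp: int_sets\<close>)
    ultimately show False by simp
  qed
  then have mpos: "m > 0" .
  show cl: "cesaro f0 x \<ge> m / x" if x: "x \<in> I" "x \<ge> 1/4" for x
  proof -
    have ix: "integrable lebesgue (\<lambda>t. indicator {0..x} t * f0 t)"
      using li[of x] x res_integrable[OF int_sets(1)] by auto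
    have "m \<le> integral\<^sup>L lebesgue (\<lambda>t. indicator {0..x} t * f0 t)"
      unfolding mi
    proof (rule integral_mono_AE[OF i14 ix])
      show "AE t in lebesgue. indicator {0..1/4} t * f0 t \<le> indicator {0..x} t * f0 t"
        using AEp
      proof (rule AE_mp, intro AE_I2 impI)
        fix t assume h: "t \<in> I \<longrightarrow> 0 < f0 t"
        show "indicator {0..1/4} t * f0 t \<le> indicator {0..x} t * f0 t"
        proof (cases "t \<in> {0..x}")
          case True then have "t \<in> I" using x Is(3) I by auto
          then show ?thesis using h True by (auto simp: indicator_def)
        next
          case False then show ?thesis using x by (auto simp: indicator_def)
        qed
      qed
    qed
    also have "\<dots> = integral\<^sup>L (lebesgue_on {0..x}) f0" by (rule res_int[symmetric, OF int_sets(1)])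
    finally have "m \<le> integral\<^sup>L (lebesgue_on {0..x}) f0" .
    then show ?thesis unfolding cesaro_def using x by (simp add: field_simps)
  qed
  have sub: "{1/2..1::real} \<subseteq> I" using Is(2) by auto
  have "(\<lambda>x. (1/m) * cesaro f0 x) \<in> X" by (rule bis_smult(1)[OF bis cX])
  moreover have "AE x in lebesgue_on I. \<bar>(indicator {1/2..1} x :: real)\<bar> \<le> \<bar>(1/m) * cesaro f0 x\<bar>"
  proof -
    have "AE x in lebesgue. x \<in> I \<longrightarrow> \<bar>(indicator {1/2..1} x :: real)\<bar> \<le> \<bar>(1/m) * cesaro f0 x\<bar>"
    proof (intro AE_I2 impI)
      fix x assume x: "x \<in> I"
      show "\<bar>(indicator {1/2..1} x :: real)\<bar> \<le> \<bar>(1/m) * cesaro f0 x\<bar>"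
      proof (cases "x \<in> {1/2..1}")
        case True
        then have "cesaro f0 x \<ge> m / x" using cl[OF x] by auto
        moreover have "m / x \<ge> m" using True mpos by (auto simp: field_simps)
        ultimately have "(1/m) * cesaro f0 x \<ge> 1" using mpos by (simp add: field_simps)
        then show ?thesis using True by (simp add: abs_if)
      qed simp
    qed
    then show ?thesis using AE_restrict_space_iff[of I lebesgue] Is(1) by simp
  qed
  ultimately show hX: "(indicator {1/2..1} :: real \<Rightarrow> real) \<in> X"
    using bis_ideal(1)[OF bis ind_meas[OF int_sets(1)]] by blast
  show "N (indicator {1/2..1}) > 0"
    by (rule bis_pos[OF bis hX notAE_ind]) (use sub Is in \<open>auto simp: int_sets\<close>)
qed

lemma C_gen:
  assumes I: "I = {0..1} \<or> I = {0::real..}" and bis: "banach_ideal_space I X N"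
    and cb: "cesaro_bounded I X N" and f0X: "f0 \<in> X"
    and f0p: "AE x in lebesgue_on I. f0 x > 0"
    and g: "integrable lebesgue g" and g0: "\<And>y. y \<notin> {1/4..1/2} \<Longrightarrow> g y = 0"
  defines "m \<equiv> integral\<^sup>L (lebesgue_on {0..1/4}) f0"
    and "A \<equiv> integral\<^sup>L lebesgue (\<lambda>t. \<bar>g t\<bar>)"
  shows "g \<in> cesaro_space I X" "cesaro_norm N g \<le> (N (cesaro f0) / m) * A"
    "N (indicator {1/2..1}) * A \<le> cesaro_norm N g"
proof -
  have Is: "I \<in> sets lebesgue" "{0..1} \<subseteq> I" "I \<subseteq> {0..}" using I_facts[OF I] by auto
  note ff = f0_facts[OF I bis cb f0X f0p, folded m_def]
  have cX: "cesaro f0 \<in> X" by (rule cb_D(2)[OF cb f0X])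
  have gm: "g \<in> borel_measurable lebesgue" using g by (rule borel_measurable_integrable)
  have ga: "integrable lebesgue (\<lambda>t. \<bar>g t\<bar>)" using g by auto
  define G where "G x = integral\<^sup>L lebesgue (\<lambda>t. indicator {0..x} t * \<bar>g t\<bar>)" for x
  have iG: "integrable lebesgue (\<lambda>t. indicator {0..x} t * \<bar>g t\<bar>)" for x
    using integrable_mult_indicator[OF int_sets(1) ga, of 0 x] by simp
  have ces: "cesaro (\<lambda>t. \<bar>g t\<bar>) x = (1/x) * G x" for x
    unfolding cesaro_def G_def by (simp add: res_int[OF int_sets(1)])
  have Gmono: "G x \<le> G y" if "x \<le> y" for x y
    unfolding G_def by (rule integral_mono[OF iG iG]) (use that in \<open>auto simp: indicator_def\<close>)
  have Gnn: "0 \<le> G x" for x unfolding G_def by (rule integral_nonneg_AE) auto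
  have Gle: "G x \<le> A" for x
    unfolding G_def A_def by (rule integral_mono[OF iG ga]) (auto simp: indicator_def)
  have G0: "G x = 0" if "x < 1/4" for x
  proof -
    have "(\<lambda>t. indicator {0..x} t * \<bar>g t\<bar>) = (\<lambda>t. 0)"
    proof
      fix t show "indicator {0..x} t * \<bar>g t\<bar> = 0"
        using that g0[of t] by (cases "t \<in> {0..x}") auto
    qed
    then show ?thesis unfolding G_def by simp
  qed
  have GA: "G x = A" if "x \<ge> 1/2" for x
  proof -
    have "(\<lambda>t. indicator {0..x} t * \<bar>g t\<bar>) = (\<lambda>t. \<bar>g t\<bar>)"
    proof
      fix t show "indicator {0..x} t * \<bar>g t\<bar> = \<bar>g t\<bar>"
        using that g0[of t] by (cases "t \<in> {0..x}") auto
    qed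
    then show ?thesis unfolding G_def A_def by simp
  qed
  have A0: "0 \<le> A" unfolding A_def by (rule integral_nonneg_AE) auto
  have cesm: "cesaro (\<lambda>t. \<bar>g t\<bar>) \<in> borel_measurable (lebesgue_on I)"
  proof -
    have "mono G" using Gmono by (auto simp: mono_def)
    then have [measurable]: "G \<in> borel_measurable borel" by (rule borel_measurable_mono)
    have "(\<lambda>x. (1/x) * G x) \<in> borel_measurable borel" by measurable
    then show ?thesis unfolding ces[abs_def] by (rule borel_to_lebesgue)
  qed
  have li: "loc_int I g" unfolding loc_int_def
  proof (intro ballI impI)
    fix x show "integrable (lebesgue_on {0..x}) g"
      using res_integrable[OF int_sets(1)] integrable_mult_indicator[OF int_sets(1) g, of 0 x] by simp
  qed
  define a where "a = A / m"
  have up: "AE x in lebesgue_on I. \<bar>cesaro (\<lambda>t. \<bar>g t\<bar>) x\<bar> \<le> \<bar>a * cesaro f0 x\<bar>"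
  proof -
    have "AE x in lebesgue. x \<in> I \<longrightarrow> \<bar>cesaro (\<lambda>t. \<bar>g t\<bar>) x\<bar> \<le> \<bar>a * cesaro f0 x\<bar>"
    proof (intro AE_I2 impI)
      fix x assume x: "x \<in> I"
      show "\<bar>cesaro (\<lambda>t. \<bar>g t\<bar>) x\<bar> \<le> \<bar>a * cesaro f0 x\<bar>"
      proof (cases "x \<ge> 1/4")
        case True
        then have xp: "x > 0" by simp
        have c1: "cesaro f0 x \<ge> m / x" using ff(2)[OF x True] .
        have "(1/x) * G x \<le> A / x" using Gle[of x] xp by (simp add: field_simps)
        also have "A / x = a * (m / x)" unfolding a_def using ff(1) by simp
        also have "\<dots> \<le> a * cesaro f0 x" using c1 A0 ff(1) unfolding a_def by (intro mult_left_mono) auto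
        finally have "(1/x) * G x \<le> a * cesaro f0 x" .
        moreover have "0 \<le> (1/x) * G x" using Gnn[of x] xp by simp
        ultimately show ?thesis unfolding ces by simp
      next
        case False then show ?thesis unfolding ces using G0[of x] by simp
      qed
    qed
    then show ?thesis using AE_restrict_space_iff[of I lebesgue] Is(1) by simp
  qed
  have aX: "(\<lambda>x. a * cesaro f0 x) \<in> X" by (rule bis_smult(1)[OF bis cX])
  note id1 = bis_ideal[OF bis cesm aX up]
  show "g \<in> cesaro_space I X" unfolding cesaro_space_def using meas_res[OF gm] li id1(1) by auto
  have "cesaro_norm N g \<le> N (\<lambda>x. a * cesaro f0 x)" unfolding cesaro_norm_def by (rule id1(2))
  also have "\<dots> = a * N (cesaro f0)" using bis_smult(2)[OF bis cX, of a] A0 ff(1) unfolding a_def by simp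
  finally show "cesaro_norm N g \<le> (N (cesaro f0) / m) * A" unfolding a_def by (simp add: mult.commute)
  have low: "AE x in lebesgue_on I. \<bar>A * indicator {1/2..1} x\<bar> \<le> \<bar>cesaro (\<lambda>t. \<bar>g t\<bar>) x\<bar>"
  proof -
    have "AE x in lebesgue. x \<in> I \<longrightarrow> \<bar>A * indicator {1/2..1} x\<bar> \<le> \<bar>cesaro (\<lambda>t. \<bar>g t\<bar>) x\<bar>"
    proof (intro AE_I2 impI)
      fix x assume x: "x \<in> I"
      show "\<bar>A * indicator {1/2..1} x\<bar> \<le> \<bar>cesaro (\<lambda>t. \<bar>g t\<bar>) x\<bar>"
      proof (cases "x \<in> {1/2..1}")
        case True
        then have "cesaro (\<lambda>t. \<bar>g t\<bar>) x = A / x" unfolding ces using GA[of x] by simp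
        moreover have "A \<le> A / x" using True A0 by (auto simp: field_simps intro: mult_left_le)
        ultimately show ?thesis using True A0 by simp
      qed simp
    qed
    then show ?thesis using AE_restrict_space_iff[of I lebesgue] Is(1) by simp
  qed
  have "(\<lambda>x. A * indicator {1/2..1} x) \<in> borel_measurable (lebesgue_on I)"
    using bis_meas[OF bis bis_smult(1)[OF bis ff(3)]] .
  then have "N (\<lambda>x. A * indicator {1/2..1} x) \<le> N (cesaro (\<lambda>t. \<bar>g t\<bar>))"
    using bis_ideal(2)[OF bis _ id1(1) low] by blast
  then show "N (indicator {1/2..1}) * A \<le> cesaro_norm N g"
    unfolding cesaro_norm_def using bis_smult(2)[OF bis ff(3), of A] A0 by (simp add: mult.commute)
qed

lemma T1:
  assumes f: "f \<in> L1_01"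
  shows "integrable lebesgue (Tm f)" "\<And>y. y \<notin> {1/4..1/2} \<Longrightarrow> Tm f y = 0"
    "integral\<^sup>L lebesgue (\<lambda>t. \<bar>Tm f t\<bar>) = L1_norm f / 4"
proof -
  define F where "F = (\<lambda>y. indicator {0..1} y * f y)"
  have Fi: "integrable lebesgue F" using f unfolding L1_01_def F_def using res_integrable[OF int_sets(1)] by auto
  have TF: "Tm f = (\<lambda>x. F (-1 + 4*x))" unfolding F_def by (rule Tm_alt)
  show "integrable lebesgue (Tm f)" unfolding TF using lebesgue_integrable_real_affine[OF Fi, of 4 "-1"] by simp
  show "\<And>y. y \<notin> {1/4..1/2} \<Longrightarrow> Tm f y = 0" by (simp add: Tm_def)
  have "integral\<^sup>L lebesgue (\<lambda>y. \<bar>F y\<bar>) = \<bar>4\<bar> *\<^sub>R integral\<^sup>L lebesgue (\<lambda>x. \<bar>F (-1 + 4*x)\<bar>)"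
    by (rule lebesgue_integral_real_affine) simp
  moreover have "integral\<^sup>L lebesgue (\<lambda>y. \<bar>F y\<bar>) = L1_norm f"
    unfolding L1_norm_def res_int[OF int_sets(1)] F_def by (simp add: abs_mult)
  ultimately show "integral\<^sup>L lebesgue (\<lambda>t. \<bar>Tm f t\<bar>) = L1_norm f / 4" unfolding TF by simp
qed

lemma P1:
  assumes I: "I = {0..1} \<or> I = {0::real..}" and bis: "banach_ideal_space I X N"
    and u: "u \<in> cesaro_space I X"
    and hX: "(indicator {1/2..1} :: real \<Rightarrow> real) \<in> X"
  defines "B \<equiv> integral\<^sup>L (lebesgue_on {0..1/2}) (\<lambda>t. \<bar>u t\<bar>)"
  shows "integrable lebesgue (Pm u)" "\<And>y. y \<notin> {1/4..1/2} \<Longrightarrow> Pm u y = 0"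
    "integral\<^sup>L lebesgue (\<lambda>t. \<bar>Pm u t\<bar>) \<le> B" "0 \<le> B"
    "N (indicator {1/2..1}) * B \<le> cesaro_norm N u"
    "(\<lambda>z. u (1/4 + z/4)) \<in> L1_01"
proof -
  have Is: "I \<in> sets lebesgue" "{0..1} \<subseteq> I" "I \<subseteq> {0..}" using I_facts[OF I] by auto
  have li: "integrable (lebesgue_on {0..x}) u" if "x \<in> I" "0 < x" for x
    using u that unfolding cesaro_space_def loc_int_def by blast
  have cX: "cesaro (\<lambda>t. \<bar>u t\<bar>) \<in> X" using u unfolding cesaro_space_def by blast
  have iu: "integrable lebesgue (\<lambda>t. indicator {0..x} t * \<bar>u t\<bar>)" if "x \<in> I" "0 < x" for x
  proof -
    have "integrable (lebesgue_on {0..x}) (\<lambda>t. \<bar>u t\<bar>)" using li[OF that] by auto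
    then show ?thesis using res_integrable[OF int_sets(1)] by auto
  qed
  have h12: "(1/2::real) \<in> I" using Is(2) by auto
  define V where "V = (\<lambda>t. indicator {0..1/2} t * u t)"
  have Vi: "integrable lebesgue V" unfolding V_def using li[OF h12] res_integrable[OF int_sets(1)] by auto
  have PV: "Pm u = (\<lambda>t. indicator {1/4..1/2} t * V t)"
    by (auto simp: Pm_def V_def fun_eq_iff indicator_def)
  show Pi: "integrable lebesgue (Pm u)" unfolding PV
    using integrable_mult_indicator[OF int_sets(1) Vi, of "1/4" "1/2"] by simp
  show "\<And>y. y \<notin> {1/4..1/2} \<Longrightarrow> Pm u y = 0" by (simp add: Pm_def)
  have BV: "B = integral\<^sup>L lebesgue (\<lambda>t. \<bar>V t\<bar>)"
    unfolding B_def res_int[OF int_sets(1)] V_def by (simp add: abs_mult)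
  show "integral\<^sup>L lebesgue (\<lambda>t. \<bar>Pm u t\<bar>) \<le> B" unfolding BV
    by (rule integral_mono) (use Pi Vi in \<open>auto simp: PV indicator_def\<close>)
  show B0: "0 \<le> B" unfolding BV by (rule integral_nonneg_AE) auto
  have low: "AE x in lebesgue_on I. \<bar>B * indicator {1/2..1} x\<bar> \<le> \<bar>cesaro (\<lambda>t. \<bar>u t\<bar>) x\<bar>"
  proof -
    have "AE x in lebesgue. x \<in> I \<longrightarrow> \<bar>B * indicator {1/2..1} x\<bar> \<le> \<bar>cesaro (\<lambda>t. \<bar>u t\<bar>) x\<bar>"
    proof (intro AE_I2 impI)
      fix x assume x: "x \<in> I"
      show "\<bar>B * indicator {1/2..1} x\<bar> \<le> \<bar>cesaro (\<lambda>t. \<bar>u t\<bar>) x\<bar>"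
      proof (cases "x \<in> {1/2..1}")
        case True
        have "B = integral\<^sup>L lebesgue (\<lambda>t. indicator {0..1/2} t * \<bar>u t\<bar>)"
          unfolding B_def by (rule res_int[OF int_sets(1)])
        also have "\<dots> \<le> integral\<^sup>L lebesgue (\<lambda>t. indicator {0..x} t * \<bar>u t\<bar>)"
          by (rule integral_mono[OF iu[OF h12] iu[OF x]]) (use True in \<open>auto simp: indicator_def\<close>)
        also have "\<dots> = integral\<^sup>L (lebesgue_on {0..x}) (\<lambda>t. \<bar>u t\<bar>)"
          by (rule res_int[symmetric, OF int_sets(1)])
        finally have "B \<le> integral\<^sup>L (lebesgue_on {0..x}) (\<lambda>t. \<bar>u t\<bar>)" .
        then have "B \<le> cesaro (\<lambda>t. \<bar>u t\<bar>) x"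
          unfolding cesaro_def using True B0
          by (auto simp: field_simps intro: order.trans[OF mult_left_le[of x B]])
        then show ?thesis using True B0 by simp
      qed simp
    qed
    then show ?thesis using AE_restrict_space_iff[of I lebesgue] Is(1) by simp
  qed
  have "(\<lambda>x. B * indicator {1/2..1} x) \<in> borel_measurable (lebesgue_on I)"
    using bis_meas[OF bis bis_smult(1)[OF bis hX]] .
  then have "N (\<lambda>x. B * indicator {1/2..1} x) \<le> N (cesaro (\<lambda>t. \<bar>u t\<bar>))"
    using bis_ideal(2)[OF bis _ cX low] by blast
  then show "N (indicator {1/2..1}) * B \<le> cesaro_norm N u"
    unfolding cesaro_norm_def using bis_smult(2)[OF bis hX, of B] B0 by (simp add: mult.commute)
  have "integrable lebesgue (\<lambda>z. Pm u (1/4 + (1/4) * z))"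
    using lebesgue_integrable_real_affine[OF Pi, of "1/4" "1/4"] by simp
  moreover have "(\<lambda>z. Pm u (1/4 + (1/4) * z)) = (\<lambda>z. indicator {0..1} z * u (1/4 + z/4))"
    by (auto simp: Pm_def fun_eq_iff indicator_def)
  ultimately show "(\<lambda>z. u (1/4 + z/4)) \<in> L1_01"
    unfolding L1_01_def using res_integrable[OF int_sets(1)] by auto
qed

lemma ces_zero: "cesaro_norm N (\<lambda>x. 0) = N (\<lambda>x. 0)"
  unfolding cesaro_norm_def cesaro_def by simp

lemma part1:
  assumes I: "I = {0..1} \<or> I = {0::real..}" and bis: "banach_ideal_space I X N"
    and cb: "cesaro_bounded I X N"
  shows "has_complemented_copy (cesaro_space I X) (cesaro_norm N) L1_01 L1_norm"
proof -
  obtain f0 where f0X: "f0 \<in> X" and f0p: "AE x in lebesgue_on I. f0 x > 0"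
    using bis_D7[OF bis] by blast
  define m where "m = integral\<^sup>L (lebesgue_on {0..1/4}) f0"
  note ff = f0_facts[OF I bis cb f0X f0p, folded m_def]
  define c1 where "c1 = N (indicator {1/2..1})"
  define Kc where "Kc = N (cesaro f0) / m"
  have cX: "cesaro f0 \<in> X" by (rule cb_D(2)[OF cb f0X])
  have Kc0: "0 \<le> Kc" unfolding Kc_def using bis_D3[OF bis] cX ff(1) by auto
  have c10: "0 < c1" unfolding c1_def by (rule ff(4))
  have z: "cesaro_norm N (\<lambda>x. 0) = 0" using ces_zero bis_zero[OF bis] by simp
  show ?thesis
    unfolding has_complemented_copy_def
  proof (rule exI[of _ Tm], rule exI[of _ Pm], rule exI[of _ "c1 / 4"],
      rule exI[of _ "Kc / 4"], rule exI[of _ "Kc / c1"], intro conjI ballI allI)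
    show "0 < c1 / 4" using c10 by simp
    fix f assume f: "f \<in> L1_01"
    note t = T1[OF f]
    note cg = C_gen[OF I bis cb f0X f0p t(1) t(2), folded m_def, unfolded t(3)]
    show "Tm f \<in> cesaro_space I X" by (rule cg(1))
    show "c1 / 4 * L1_norm f \<le> cesaro_norm N (Tm f)" using cg(3) unfolding c1_def by simp
    show "cesaro_norm N (Tm f) \<le> Kc / 4 * L1_norm f" using cg(2) unfolding Kc_def by simp
    show "cesaro_norm N (\<lambda>x. Pm (Tm f) x - Tm f x) = 0" using z by (simp add: PmTm)
  next
    fix f g a b
    show "cesaro_norm N (\<lambda>x. Tm (\<lambda>y. a * f y + b * g y) x - (a * Tm f x + b * Tm g x)) = 0"
      using z by (simp add: Tm_def algebra_simps)
  next
    fix u v a b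
    show "cesaro_norm N (\<lambda>x. Pm (\<lambda>y. a * u y + b * v y) x - (a * Pm u x + b * Pm v x)) = 0"
      using z by (simp add: Pm_def algebra_simps)
  next
    fix u assume u: "u \<in> cesaro_space I X"
    note p = P1[OF I bis u ff(3)]
    define B where "B = integral\<^sup>L (lebesgue_on {0..1/2}) (\<lambda>t. \<bar>u t\<bar>)"
    note cg = C_gen[OF I bis cb f0X f0p p(1) p(2), folded m_def]
    show "Pm u \<in> cesaro_space I X" by (rule cg(1))
    show "\<exists>f\<in>L1_01. cesaro_norm N (\<lambda>x. Pm u x - Tm f x) = 0"
      using p(6) z by (intro bexI[of _ "\<lambda>z. u (1/4 + z/4)"]) (auto simp: Pm_Tm)
    have "cesaro_norm N (Pm u) \<le> Kc * integral\<^sup>L lebesgue (\<lambda>t. \<bar>Pm u t\<bar>)"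
      using cg(2) unfolding Kc_def .
    also have "\<dots> \<le> Kc * B" using p(3) Kc0 unfolding B_def by (rule mult_left_mono)
    also have "\<dots> \<le> Kc * (cesaro_norm N u / c1)"
    proof -
      have "B \<le> cesaro_norm N u / c1" using p(5) c10 unfolding B_def c1_def by (simp add: field_simps)
      then show ?thesis using Kc0 by (rule mult_left_mono)
    qed
    finally show "cesaro_norm N (Pm u) \<le> Kc / c1 * cesaro_norm N u" by simp
  qed
qed

theorem proposition1:
  fixes I :: "real set" and X :: "(real \<Rightarrow> real) set" and N :: "(real \<Rightarrow> real) \<Rightarrow> real"
  assumes "I = {0..1} \<or> I = {0..}"
    and "banach_ideal_space I X N"
    and "cesaro_bounded I X N"
  shows "has_complemented_copy (cesaro_space I X) (cesaro_norm N) L1_01 L1_norm \<and>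
         ((\<forall>a::real. 0 < a \<and> a < 1 \<longrightarrow> (indicator {0..a} :: real \<Rightarrow> real) \<in> X) \<longrightarrow>
            (\<exists>f\<in>tilde_space I X. \<not> (AE x in lebesgue_on I. f x = 0)) \<and>
            has_complemented_copy (tilde_space I X) (tilde_norm I N) Linf_01 Linf_norm)"
  using part1[OF assms] part2[OF assms(1,2)] by blast

end
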